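(* For every state $n\in\mathbb{N}$ of the transducer $\mathcal{D}_{p/q}$ and every letter $b\in A_q$, there exist a unique state $m\in\mathbb{N}$ and a unique letter $c\in A_q$ such that $n\xrightarrow{b|c} m$ is a transition of $\mathcal{D}_{p/q}$.
   Context: Let $p>q>1$ be coprime integers, $A_q=\{0,1,\dots,q-1\}$ and $B=\{p-(2q-1),\dots,p-1\}$ (a set of integers, possibly containing negative ones). For $n\in\mathbb{N}$ and $a\in\mathbb{Z}$, let $\tau(n,a)=\frac{np+a}{q}$, defined only when $q$ divides $np+a$. For $a\in B$ let $\omega(a)=\{(b,c)\in A_q\times A_q : c-b=a-(p-q)\}$. The transducer $\mathcal{D}_{p/q}$ has state set $\mathbb{N}$, input and output alphabet $A_q$, initial state $0$, all states final, and has a transition $n\xrightarrow{b|c}\tau(n,a)$ (input $b$, output $c$) for every $n\in\mathbb{N}$, every $a\in B$ such that $\tau(n,a)$ is defined, and every $(b,c)\in\omega(a)$; it has no other transitions. *)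

theory Defs
  imports Main
begin

definition A_alph :: "int \<Rightarrow> int set" where
  "A_alph q = {0..q-1}"

definition B_set :: "int \<Rightarrow> int \<Rightarrow> int set" where
  "B_set p q = {p - (2*q - 1)..p - 1}"

definition omega :: "int \<Rightarrow> int \<Rightarrow> int \<Rightarrow> (int \<times> int) set" where
  "omega p q a = {(b, c). b \<in> A_alph q \<and> c \<in> A_alph q \<and> c - b = a - (p - q)}"

definition trans_D :: "int \<Rightarrow> int \<Rightarrow> nat \<Rightarrow> int \<Rightarrow> int \<Rightarrow> nat \<Rightarrow> bool" where
  "trans_D p q n b c m \<longleftrightarrow>
     (\<exists>a \<in> B_set p q. q dvd (int n * p + a) \<and>
        int m = (int n * p + a) div q \<and> (b, c) \<in> omega p q a)"

end

theory Submission
  imports Defs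
begin

theorem mainTheorem1:
  fixes p q :: int
  assumes "p > q" and "q > 1" and "coprime p q"
  shows "\<forall>(n::nat). \<forall>b \<in> A_alph q.
           \<exists>!(m, c). c \<in> A_alph q \<and> trans_D p q n b c m"
proof (intro allI ballI)
  fix n :: nat and b assume hb: "b \<in> A_alph q"
  hence b0: "0 \<le> b" "b \<le> q - 1" by (auto simp: A_alph_def)
  define c where "c = (b - (int n + 1) * p) mod q"
  have c0: "0 \<le> c" "c < q" using assms(2) by (auto simp: c_def)
  define a where "a = c - b + p - q"
  have dv: "q dvd (int n * p + a)"
  proof -
    have "int n * p + a = (c - (b - (int n + 1) * p)) - q" by (simp add: a_def algebra_simps)
    moreover have "q dvd (c - (b - (int n + 1) * p))"
      unfolding c_def by (simp add: mod_eq_dvd_iff[symmetric])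
    ultimately show ?thesis by simp
  qed
  then obtain k where k: "int n * p + a = q * k" by (auto simp: dvd_def)
  have np: "int n * p \<ge> 0" using assms by simp
  have "q * k > - q" using k b0 c0 assms(1) np unfolding a_def by linarith
  hence "k > -1" using assms(2)
    using mult_less_cancel_left_pos[of q "-1" k] by simp
  hence k0: "k \<ge> 0" by simp
  have ex: "c \<in> A_alph q \<and> trans_D p q n b c (nat k)"
    unfolding trans_D_def
  proof (intro conjI bexI)
    show "c \<in> A_alph q" using c0 by (simp add: A_alph_def)
    show "q dvd (int n * p + a)" by fact
    show "int (nat k) = (int n * p + a) div q" using k k0 assms(2) by simp
    show "(b, c) \<in> omega p q a" using hb c0 by (simp add: omega_def A_alph_def a_def)
    show "a \<in> B_set p q" using b0 c0 by (simp add: B_set_def a_def)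
  qed
  show "\<exists>!(m, c). c \<in> A_alph q \<and> trans_D p q n b c m"
  proof (rule ex1I[where a="(nat k, c)"])
    show "case (nat k, c) of (m, c) \<Rightarrow> c \<in> A_alph q \<and> trans_D p q n b c m" using ex by simp
  next
    fix y assume "case y of (m, c) \<Rightarrow> c \<in> A_alph q \<and> trans_D p q n b c m"
    then obtain m' c' where y: "y = (m', c')" and hc': "c' \<in> A_alph q"
      and t: "trans_D p q n b c' m'" by (cases y) auto
    from t obtain a' where dv': "q dvd (int n * p + a')"
      and m': "int m' = (int n * p + a') div q" and om: "(b, c') \<in> omega p q a'"
      by (auto simp: trans_D_def)
    have a': "a' = c' - b + p - q" using om by (simp add: omega_def)
    have "q dvd (int n * p + a') - (int n * p + a)" using dvd_diff[OF dv' dv] .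
    hence "q dvd (c' - c)" by (simp add: a' a_def)
    hence "c' mod q = c mod q" by (simp add: mod_eq_dvd_iff)
    hence cc: "c' = c" using c0 hc' by (simp add: A_alph_def)
    hence "a' = a" by (simp add: a' a_def)
    hence "int m' = k" using m' k assms(2) by simp
    hence "m' = nat k" by simp
    thus "y = (nat k, c)" using y cc by simp
  qed
qed

end
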